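(* Let $\mu$ be an infinite cardinal. Then there is a strong $\mu^+$-system $S = \langle I \times \kappa, \mathcal{R}\rangle$ such that $|\mathcal{R}| = \mu$ and $S$ has no cofinal branch.
   Context: Let $\lambda$ be an infinite regular cardinal. A binary relation $R$ on a set $X$ is tree-like if whenever $a <_R c$ and $b <_R c$, then $a,b$ are $R$-comparable (i.e. $a=b$, $a<_R b$ or $b<_R a$). A $\lambda$-system is $S=\langle\{\{\alpha\}\times\kappa_\alpha\mid\alpha\in I\},\mathcal{R}\rangle$ where: $I\subseteq\lambda$ is unbounded and $0<\kappa_\alpha<\lambda$ for $\alpha\in I$ (the $\alpha$-th level is $S_\alpha=\{\alpha\}\times\kappa_\alpha$, and $S$ also denotes the union of the levels); $\mathcal{R}$ is a set of binary, transitive, tree-like relations on $S$ with $|\mathcal{R}|<\lambda$; for all $R\in\mathcal{R}$, if $(\alpha_0,\beta_0)<_R(\alpha_1,\beta_1)$ then $\alpha_0<\alpha_1$; and for all $\alpha_0<\alpha_1$ in $I$ there are $\beta_0<\kappa_{\alpha_0}$, $\beta_1<\kappa_{\alpha_1}$, $R\in\mathcal{R}$ with $(\alpha_0,\beta_0)<_R(\alpha_1,\beta_1)$. It is a strong $\lambda$-system if moreover for all $\alpha_0<\alpha_1$ in $I$ and every $\beta_1<\kappa_{\alpha_1}$ there are $\beta_0<\kappa_{\alpha_0}$ and $R\in\mathcal{R}$ with $(\alpha_0,\beta_0)<_R(\alpha_1,\beta_1)$. $\langle I\times\kappa,\mathcal{R}\rangle$ denotes a system with $\kappa_\alpha=\kappa$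 for all $\alpha\in I$. A branch of $S$ through $R\in\mathcal{R}$ is a set $b\subseteq S$ any two elements of which are $R$-comparable; it is cofinal if $b\cap S_\alpha\neq\emptyset$ for unboundedly many $\alpha\in I$. $S$ has a cofinal branch if it has a cofinal branch through some $R\in\mathcal{R}$. *)

theory Defs
  imports Main
begin

text \<open>Infinite cardinals are represented as cardinal well-orders (Card_order r);
  the successor cardinal is cardSuc r.  A lambda-system is given by the well-order
  lam (levels are elements of Field lam), an index set I, level sets kap alpha
  (the alpha-th level is {alpha} x kap alpha) and a set Rs of strict relations.\<close>

definition lvl_less :: "'l rel \<Rightarrow> 'l \<Rightarrow> 'l \<Rightarrow> bool" where
  "lvl_less lam a b \<longleftrightarrow> (a, b) \<in> lam \<and> a \<noteq> b"

definition unbounded_in :: "'l rel \<Rightarrow> 'l set \<Rightarrow> bool" where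
  "unbounded_in lam I \<longleftrightarrow> I \<subseteq> Field lam \<and> (\<forall>a\<in>Field lam. \<exists>b\<in>I. (a, b) \<in> lam)"

definition tree_like :: "'x rel \<Rightarrow> bool" where
  "tree_like R \<longleftrightarrow> (\<forall>a b c. (a, c) \<in> R \<and> (b, c) \<in> R \<longrightarrow> a = b \<or> (a, b) \<in> R \<or> (b, a) \<in> R)"

definition lambda_system ::
  "'l rel \<Rightarrow> 'l set \<Rightarrow> ('l \<Rightarrow> 'k set) \<Rightarrow> ('l \<times> 'k) rel set \<Rightarrow> bool" where
  "lambda_system lam I kap Rs \<longleftrightarrow>
     unbounded_in lam I \<and>
     (\<forall>a\<in>I. kap a \<noteq> {} \<and> (card_of (kap a), lam) \<in> ordLess) \<and>
     (card_of Rs, lam) \<in> ordLess \<and>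
     (\<forall>R\<in>Rs. R \<subseteq> Sigma I kap \<times> Sigma I kap \<and> trans R \<and> tree_like R) \<and>
     (\<forall>R\<in>Rs. \<forall>a0 b0 a1 b1. ((a0, b0), (a1, b1)) \<in> R \<longrightarrow> lvl_less lam a0 a1) \<and>
     (\<forall>a0\<in>I. \<forall>a1\<in>I. lvl_less lam a0 a1 \<longrightarrow>
        (\<exists>b0\<in>kap a0. \<exists>b1\<in>kap a1. \<exists>R\<in>Rs. ((a0, b0), (a1, b1)) \<in> R))"

definition strong_lambda_system ::
  "'l rel \<Rightarrow> 'l set \<Rightarrow> ('l \<Rightarrow> 'k set) \<Rightarrow> ('l \<times> 'k) rel set \<Rightarrow> bool" where
  "strong_lambda_system lam I kap Rs \<longleftrightarrow>
     lambda_system lam I kap Rs \<and>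
     (\<forall>a0\<in>I. \<forall>a1\<in>I. lvl_less lam a0 a1 \<longrightarrow>
        (\<forall>b1\<in>kap a1. \<exists>b0\<in>kap a0. \<exists>R\<in>Rs. ((a0, b0), (a1, b1)) \<in> R))"

definition is_branch :: "'l set \<Rightarrow> ('l \<Rightarrow> 'k set) \<Rightarrow> ('l \<times> 'k) rel \<Rightarrow> ('l \<times> 'k) set \<Rightarrow> bool" where
  "is_branch I kap R b \<longleftrightarrow> b \<subseteq> Sigma I kap \<and>
     (\<forall>x\<in>b. \<forall>y\<in>b. x = y \<or> (x, y) \<in> R \<or> (y, x) \<in> R)"

definition cofinal_set :: "'l rel \<Rightarrow> 'l set \<Rightarrow> ('l \<Rightarrow> 'k set) \<Rightarrow> ('l \<times> 'k) set \<Rightarrow> bool" where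
  "cofinal_set lam I kap b \<longleftrightarrow> unbounded_in lam {a\<in>I. b \<inter> ({a} \<times> kap a) \<noteq> {}}"

definition has_cofinal_branch ::
  "'l rel \<Rightarrow> 'l set \<Rightarrow> ('l \<Rightarrow> 'k set) \<Rightarrow> ('l \<times> 'k) rel set \<Rightarrow> bool" where
  "has_cofinal_branch lam I kap Rs \<longleftrightarrow>
     (\<exists>R\<in>Rs. \<exists>b. is_branch I kap R b \<and> cofinal_set lam I kap b)"

end

theory Submission
  imports Defs
begin

unbundle cardinal_syntax

lemma finite_bounded:
  assumes C: "Card_order lam" and inf: "infinite (Field lam)"
    and L: "finite L" "L \<subseteq> Field lam"
  shows "\<exists>a\<in>Field lam. \<forall>l\<in>L. (a, l) \<notin> lam"
proof (cases "L = {}")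
  case True
  have "Field lam \<noteq> {}" using inf by auto
  then show ?thesis using True by auto
next
  case False
  have wo: "wo_rel lam" using C Card_order_wo_rel by blast
  hence lin: "Linear_order lam" unfolding wo_rel_def well_order_on_def by blast
  obtain m where m: "m \<in> L" "\<forall>l\<in>L. (l, m) \<in> lam"
  proof -
    have "\<exists>m\<in>L. \<forall>l\<in>L. (l, m) \<in> lam" using L(1) False L(2)
    proof (induction L rule: finite_ne_induct)
      case (singleton x)
      then show ?case using refl_onD[OF wo_rel.REFL[OF wo]] by auto
    next
      case (insert x F)
      then obtain m where m: "m \<in> F" "\<forall>l\<in>F. (l, m) \<in> lam" by auto
      have xF: "x \<in> Field lam" "m \<in> Field lam" using insert m by auto
      show ?case
      proof (cases "(x, m) \<in> lam")
        case True then show ?thesis using m by auto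
      next
        case False
        hence xm: "(m, x) \<in> lam" using wo_rel.TOTALS[OF wo] xF
          by (metis wo_rel.REFL[OF wo] refl_on_def)
        have "\<forall>l\<in>insert x F. (l, x) \<in> lam"
        proof
          fix l assume "l \<in> insert x F"
          then show "(l, x) \<in> lam"
            using m xm wo_rel.TRANS[OF wo] wo_rel.REFL[OF wo] xF
            unfolding trans_def refl_on_def by blast
        qed
        then show ?thesis by auto
      qed
    qed
    then show ?thesis using that by blast
  qed
  have mF: "m \<in> Field lam" using m L by auto
  obtain b where b: "b \<in> Field lam" "m \<noteq> b" "(m, b) \<in> lam"
    using infinite_Card_order_limit[OF C inf mF] by blast
  show ?thesis
  proof (intro bexI[OF _ b(1)] ballI)
    fix l assume l: "l \<in> L"
    show "(b, l) \<notin> lam"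
    proof
      assume bl: "(b, l) \<in> lam"
      have "(b, m) \<in> lam" using bl m l wo_rel.TRANS[OF wo] unfolding trans_def by blast
      then show False using b wo_rel.ANTISYM[OF wo] unfolding antisym_def by blast
    qed
  qed
qed

theorem mainTheorem3:
  fixes r :: "'a rel"
  assumes "Card_order r" and "infinite (Field r)"
  shows "\<exists>(I :: 'a set set) (K :: 'a set) (Rs :: ('a set \<times> 'a) rel set).
           strong_lambda_system (cardSuc r) I (\<lambda>_. K) Rs \<and>
           (card_of Rs, r) \<in> ordIso \<and>
           \<not> has_cofinal_branch (cardSuc r) I (\<lambda>_. K) Rs"
proof -
  define lam where "lam = cardSuc r"
  have Clam: "Card_order lam" using cardSuc_Card_order assms(1) lam_def by blast
  have wo: "wo_rel lam" using Clam Card_order_wo_rel by blast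
  have rlam: "r <o lam" using cardSuc_greater assms(1) lam_def by blast
  have Fr: "|Field r| =o r" using card_of_Field_ordIso assms(1) by blast
  have Wr: "Well_order r" using assms(1) unfolding card_order_on_def by blast
  have Wl: "Well_order lam" using Clam unfolding card_order_on_def by blast
  have inflam: "infinite (Field lam)"
  proof
    assume "finite (Field lam)"
    moreover have "|Field r| \<le>o |Field lam|"
      using card_of_mono2 rlam ordLess_imp_ordLeq by blast
    ultimately show False using assms(2) card_of_ordLeq_finite by blast
  qed
  have ginj: "\<exists>h. inj_on h (underS lam \<beta>) \<and> h ` underS lam \<beta> \<subseteq> Field r - {\<delta>}"
    if "\<beta> \<in> Field lam" for \<beta> \<delta>
  proof -
    have "|underS lam \<beta>| <o lam" using card_of_underS[OF Clam that] .
    hence "|underS lam \<beta>| \<le>o r" using cardSuc_ordLeq_ordLess assms(1) lam_def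
      card_of_Card_order by blast
    hence a: "|underS lam \<beta>| \<le>o |Field r|" using Fr ordLeq_ordIso_trans ordIso_symmetric by blast
    obtain h where "bij_betw h (Field r) (Field r - {\<delta>})"
      using infinite_imp_bij_betw[OF assms(2)] by blast
    hence "|Field r| =o |Field r - {\<delta>}|" using card_of_ordIso by blast
    hence "|underS lam \<beta>| \<le>o |Field r - {\<delta>}|" using a ordLeq_ordIso_trans by blast
    then show ?thesis using card_of_ordLeq by blast
  qed
  define g where "g \<beta> \<delta> = (SOME h. inj_on h (underS lam \<beta>) \<and> h ` underS lam \<beta> \<subseteq> Field r - {\<delta>})" for \<beta> \<delta>
  have g: "inj_on (g \<beta> \<delta>) (underS lam \<beta>) \<and> g \<beta> \<delta> ` underS lam \<beta> \<subseteq> Field r - {\<delta>}"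
    if "\<beta> \<in> Field lam" for \<beta> \<delta>
    unfolding g_def using someI_ex[OF ginj[OF that]] .
  define R where "R i = {((\<alpha>, i), (\<beta>, \<delta>)) | \<alpha> \<beta> \<delta>. \<beta> \<in> Field lam \<and> \<alpha> \<in> underS lam \<beta>
      \<and> \<delta> \<in> Field r \<and> g \<beta> \<delta> \<alpha> = i}" for i
  define Rs where "Rs = R ` Field r"
  have Rmem: "((\<alpha>, i), (\<beta>, \<delta>)) \<in> R j \<longleftrightarrow> i = j \<and> \<beta> \<in> Field lam \<and> \<alpha> \<in> underS lam \<beta>
      \<and> \<delta> \<in> Field r \<and> g \<beta> \<delta> \<alpha> = i" for \<alpha> i \<beta> \<delta> j
    unfolding R_def by auto
  have Rfacts: "((\<alpha>, i), (\<beta>, \<delta>)) \<in> R j \<Longrightarrow> i \<in> Field r \<and> i \<noteq> \<delta> \<and> \<alpha> \<in> Field lam \<and> (\<alpha>, \<beta>) \<in> lam \<and> \<alpha> \<noteq> \<beta>"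
    for \<alpha> i \<beta> \<delta> j
  proof -
    assume h: "((\<alpha>, i), (\<beta>, \<delta>)) \<in> R j"
    hence h2: "\<beta> \<in> Field lam" "\<alpha> \<in> underS lam \<beta>" "\<delta> \<in> Field r" "g \<beta> \<delta> \<alpha> = i"
      unfolding Rmem by auto
    have "i \<in> Field r - {\<delta>}" using g[OF h2(1), of \<delta>] h2 by blast
    moreover have "(\<alpha>, \<beta>) \<in> lam" "\<alpha> \<noteq> \<beta>" using h2(2) unfolding underS_def by auto
    moreover hence "\<alpha> \<in> Field lam" unfolding Field_def by blast
    ultimately show ?thesis by blast
  qed
  have noch: "\<not> ((x, y) \<in> R i \<and> (y, z) \<in> R i)" for x y z i
  proof
    assume h: "(x, y) \<in> R i \<and> (y, z) \<in> R i"
    obtain a b where y: "y = (a, b)" by fastforce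
    obtain x1 x2 where x: "x = (x1, x2)" by fastforce
    obtain z1 z2 where z: "z = (z1, z2)" by fastforce
    have "b = i" using h unfolding y z Rmem by blast
    moreover have "x2 = i" "x2 \<noteq> b" using h Rfacts[of x1 x2 a b i] unfolding x y Rmem by auto
    ultimately show False by simp
  qed
  have Rsub: "R i \<subseteq> Sigma (Field lam) (\<lambda>_. Field r) \<times> Sigma (Field lam) (\<lambda>_. Field r)" for i
  proof
    fix p assume p: "p \<in> R i"
    then obtain \<alpha> j \<beta> \<delta> where "p = ((\<alpha>, j), (\<beta>, \<delta>))" unfolding R_def by blast
    then show "p \<in> Sigma (Field lam) (\<lambda>_. Field r) \<times> Sigma (Field lam) (\<lambda>_. Field r)"
      using p Rfacts[of \<alpha> j \<beta> \<delta> i] Rmem by auto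
  qed
  have trR: "trans (R i)" for i using noch unfolding trans_def by blast
  have tlR: "tree_like (R i)" for i
    unfolding tree_like_def
  proof (intro allI impI)
    fix a b c assume h: "(a, c) \<in> R i \<and> (b, c) \<in> R i"
    obtain a1 a2 b1 b2 c1 c2 where e: "a = (a1, a2)" "b = (b1, b2)" "c = (c1, c2)" by fastforce
    have h1: "a2 = i" "c1 \<in> Field lam" "a1 \<in> underS lam c1" "g c1 c2 a1 = i"
      using h unfolding e Rmem by auto
    have h2: "b2 = i" "b1 \<in> underS lam c1" "g c1 c2 b1 = i"
      using h unfolding e Rmem by auto
    have "inj_on (g c1 c2) (underS lam c1)" using g[OF h1(2)] by blast
    hence "a1 = b1" using h1 h2 unfolding inj_on_def by metis
    then show "a = b \<or> (a, b) \<in> R i \<or> (b, a) \<in> R i" using h unfolding e Rmem by auto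
  qed
  have strong: "\<exists>b0\<in>Field r. \<exists>R'\<in>Rs. ((a0, b0), (a1, b1)) \<in> R'"
    if "a1 \<in> Field lam" "lvl_less lam a0 a1" "b1 \<in> Field r" for a0 a1 b1
  proof -
    have u: "a0 \<in> underS lam a1" using that unfolding lvl_less_def underS_def by auto
    let ?i = "g a1 b1 a0"
    have "?i \<in> Field r" using g[OF that(1)] u by auto
    moreover have "((a0, ?i), (a1, b1)) \<in> R ?i" using u that unfolding Rmem by auto
    ultimately show ?thesis unfolding Rs_def by blast
  qed
  have RsLeq: "|Rs| \<le>o r" unfolding Rs_def using card_of_image Fr ordLeq_ordIso_trans by blast
  obtain \<beta> where \<beta>: "\<beta> \<in> Field lam" "r =o Restr lam (underS lam \<beta>)"
    using ordLess_iff_ordIso_Restr[OF Wl Wr] rlam by blast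
  have "|Field r| \<le>o |underS lam \<beta>|"
  proof -
    have "|Field r| \<le>o |Field (Restr lam (underS lam \<beta>))|"
      using card_of_mono2 \<beta>(2) ordIso_imp_ordLeq by blast
    moreover have "|Field (Restr lam (underS lam \<beta>))| \<le>o |underS lam \<beta>|"
      by (rule card_of_mono1) (auto simp: Field_def)
    ultimately show ?thesis using ordLeq_transitive by blast
  qed
  moreover obtain \<delta>0 where d0: "\<delta>0 \<in> Field r" using assms(2) by fastforce
  have "|underS lam \<beta>| \<le>o |Rs|"
  proof (rule card_of_ordLeqI[where f = "\<lambda>\<alpha>. R (g \<beta> \<delta>0 \<alpha>)"])
    show "inj_on (\<lambda>\<alpha>. R (g \<beta> \<delta>0 \<alpha>)) (underS lam \<beta>)"
    proof (rule inj_onI)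
      fix x y assume x: "x \<in> underS lam \<beta>" and y: "y \<in> underS lam \<beta>"
        and e: "R (g \<beta> \<delta>0 x) = R (g \<beta> \<delta>0 y)"
      have "((x, g \<beta> \<delta>0 x), (\<beta>, \<delta>0)) \<in> R (g \<beta> \<delta>0 x)" using x \<beta> d0 unfolding Rmem by auto
      hence "((x, g \<beta> \<delta>0 x), (\<beta>, \<delta>0)) \<in> R (g \<beta> \<delta>0 y)" using e by simp
      hence "g \<beta> \<delta>0 x = g \<beta> \<delta>0 y" unfolding Rmem by blast
      then show "x = y" using g[OF \<beta>(1)] x y unfolding inj_on_def by blast
    qed
  next
    fix a assume "a \<in> underS lam \<beta>"
    then show "R (g \<beta> \<delta>0 a) \<in> Rs" using g[OF \<beta>(1)] unfolding Rs_def by blast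
  qed
  ultimately have "|Field r| \<le>o |Rs|" using ordLeq_transitive by blast
  hence "r \<le>o |Rs|" using Fr ordIso_symmetric ordIso_ordLeq_trans by blast
  hence RsIso: "|Rs| =o r" using RsLeq ordIso_iff_ordLeq by blast
  have sys: "strong_lambda_system lam (Field lam) (\<lambda>_. Field r) Rs"
    unfolding strong_lambda_system_def lambda_system_def
  proof (intro conjI ballI allI impI)
    show "unbounded_in lam (Field lam)"
      unfolding unbounded_in_def using wo_rel.REFL[OF wo] unfolding refl_on_def by blast
  next
    show "Field r \<noteq> {}" using d0 by auto
  next
    show "|Field r| <o lam" using Fr rlam ordIso_ordLess_trans by blast
  next
    show "|Rs| <o lam" using RsLeq rlam ordLeq_ordLess_trans by blast
  next
    fix R' assume "R' \<in> Rs"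
    then obtain i where "R' = R i" unfolding Rs_def by blast
    then show "R' \<subseteq> Sigma (Field lam) (\<lambda>_. Field r) \<times> Sigma (Field lam) (\<lambda>_. Field r)"
      "trans R'" "tree_like R'" using Rsub trR tlR by auto
  next
    fix R' a0 b0 a1 b1 assume "R' \<in> Rs" "((a0, b0), a1, b1) \<in> R'"
    then show "lvl_less lam a0 a1" using Rfacts unfolding Rs_def lvl_less_def by blast
  next
    fix a0 a1 assume "a0 \<in> Field lam" "a1 \<in> Field lam" "lvl_less lam a0 a1"
    then show "\<exists>b0\<in>Field r. \<exists>b1\<in>Field r. \<exists>R\<in>Rs. ((a0, b0), a1, b1) \<in> R"
      using strong d0 by blast
  next
    fix a0 a1 b1 assume "a0 \<in> Field lam" "a1 \<in> Field lam" "lvl_less lam a0 a1" "b1 \<in> Field r"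
    then show "\<exists>b0\<in>Field r. \<exists>R\<in>Rs. ((a0, b0), a1, b1) \<in> R"
      using strong by blast
  qed
  have nob: "\<not> has_cofinal_branch lam (Field lam) (\<lambda>_. Field r) Rs"
    unfolding has_cofinal_branch_def
  proof (intro notI, elim bexE exE conjE)
    fix R' b assume "R' \<in> Rs" and br: "is_branch (Field lam) (\<lambda>_. Field r) R' b"
      and cf: "cofinal_set lam (Field lam) (\<lambda>_. Field r) b"
    then obtain i where Ri: "R' = R i" unfolding Rs_def by blast
    define L where "L = {a \<in> Field lam. b \<inter> ({a} \<times> Field r) \<noteq> {}}"
    have three: False if "x \<in> b" "y \<in> b" "z \<in> b" "x \<noteq> y" "y \<noteq> z" "x \<noteq> z" for x y z
    proof -
      have c: "\<And>u v. u \<in> b \<Longrightarrow> v \<in> b \<Longrightarrow> u = v \<or> (u, v) \<in> R i \<or> (v, u) \<in> R i"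
        using br Ri unfolding is_branch_def by blast
      show False using c[OF that(1,2)] c[OF that(2,3)] c[OF that(1,3)] that(4-6) noch by blast
    qed
    have Lfin: "finite L"
    proof (rule ccontr)
      assume "infinite L"
      then obtain A where A: "A \<subseteq> L" "card A = 3" by (meson infinite_arbitrarily_large)
      then obtain l1 l2 l3 where ls: "A = {l1, l2, l3}" "l1 \<noteq> l2" "l2 \<noteq> l3" "l1 \<noteq> l3"
        by (metis card_3_iff)
      have "\<exists>x\<in>b. fst x = l" if "l \<in> L" for l using that unfolding L_def by force
      moreover have "l1 \<in> L" "l2 \<in> L" "l3 \<in> L" using A ls by auto
      ultimately obtain x y z where "x \<in> b" "y \<in> b" "z \<in> b" "fst x = l1" "fst y = l2" "fst z = l3"
        by meson
      then show False using three ls by (metis (no_types))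
    qed
    obtain a where a: "a \<in> Field lam" "\<forall>l\<in>L. (a, l) \<notin> lam"
      using finite_bounded[OF Clam inflam Lfin] L_def by auto
    show False using cf a unfolding cofinal_set_def unbounded_in_def L_def by blast
  qed
  show ?thesis using sys RsIso nob unfolding lam_def by blast
qed

end
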